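(* Fix $i,j\in I$ with $\tau(i)=i\neq j$, and for $m,n\in\mathbb{N}$ let $w_{m,n}(x,y)\in\mathbb{K}[x,y]$ be the unique polynomial with $F_i^mF_jF_i^n=\sum_{r,s}b_{rs}F_i^{\circledast r}\circledast F_j\circledast F_i^{\circledast s}$ in $\mathcal{A}$, where $w_{m,n}(x,y)=\sum_{r,s}b_{rs}x^ry^s$. Then $$w_{m,n}(x,y)=\frac{H_{m,n}(b_ix,b_iy;q_i^2,q_i^{a_{ij}})}{(2b_i)^{m+n}},$$ where $b_i=\tfrac12(q_i-q_i^{-1})c_i^{-1/2}q_i^{-1/2}$ (in a quadratic extension of $\mathbb{K}$; the right-hand side depends only on $b_i^2=\frac{(q_i-q_i^{-1})^2}{4c_iq_i}$ and lies in $\mathbb{K}[x,y]$).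
   Context: Let $I$ be a finite set and $(a_{kl})_{k,l\in I}$ a symmetrizable generalized Cartan matrix, with relatively prime positive integers $d_k$ such that $(d_ka_{kl})$ is symmetric. Let $Q=\bigoplus_{k\in I}\mathbb{Z}\alpha_k$ with $(\alpha_k,\alpha_l)=d_ka_{kl}$, $Q^+=\bigoplus_k\mathbb{N}\alpha_k$. Let $\mathbb{K}$ be a field of characteristic zero, $q\in\mathbb{K}^\times$ with $q^{2d_k}\neq1$ for all $k$, $q_k=q^{d_k}$. Let $\tau:I\to I$ be a bijection with $\tau^2=\mathrm{id}$ and $a_{\tau(k)\tau(l)}=a_{kl}$, and $(c_k)\in(\mathbb{K}^\times)^I$ with $c_k=c_{\tau(k)}$ whenever $a_{k\tau(k)}=0$. Let $T(V^-)=\mathbb{K}\langle F_k:k\in I\rangle$ be the free algebra graded by $-Q^+$ ($\deg F_k=-\alpha_k$), with linear maps $\partial_k^L,\partial_k^R$ defined by $\partial_k^{L}(F_l)=\partial_k^R(F_l)=\delta_{kl}$, $\partial^{L}_k(1)=\partial^R_k(1)=0$ and, for $f$ of degree $-\mu$, $g$ of degree $-\nu$: $\partial_k^R(fg)=q^{(\alpha_k,\nu)}\partial_k^R(f)g+f\partial_k^R(g)$, $\partial_k^L(fg)=\partial_k^L(f)g+q^{(\alpha_k,\mu)}f\partial_k^L(g)$. Let $G_\theta\subseteq Q$ be generated by $\alpha_k-\alpha_{\tau(k)}$, and $\mathcal{A}$ the $\mathbb{K}$-algebra generated by $T(V^-)$ and $K_\mu$ ($\mu\in G_\theta$) with $K_0=1$,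 $K_\mu K_\nu=K_{\mu+\nu}$, $K_\mu F_k=q^{-(\mu,\alpha_k)}F_kK_\mu$; $K_{\tau(k)}K_k^{-1}:=K_{\alpha_{\tau(k)}-\alpha_k}$, $H_\theta=\mathrm{span}\{K_\mu\}$. By earlier work there is a unique associative product $\circledast$ on $\mathcal{A}$ with $h\circledast g=hg$, $g\circledast h=gh$ ($h\in H_\theta$, $g\in T(V^-)$) and $F_k\circledast g=F_kg-\frac{c_kq^{(\alpha_k,\alpha_{\tau(k)})}}{q_k-q_k^{-1}}K_{\tau(k)}K_k^{-1}\partial^L_{\tau(k)}(g)$. Bivariate continuous $p$-Hermite polynomials: $H_n(x;p)$ is defined by $H_{-1}=0$, $H_0=1$, $H_{n+1}=2xH_n-(1-p^n)H_{n-1}$; $H_{m,n}(x,y;p,r)$ is defined by $H_{-1,n}=H_{m,-1}=0$, $H_{0,n}(x,y;p,r)=H_n(y;p)$, and $H_{m+1,n}=2xH_{m,n}-(1-p^m)H_{m-1,n}-p^m(1-p^n)rH_{m,n-1}$ for $m,n\ge0$. *)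

theory Defs
  imports "HOL-Computational_Algebra.Polynomial"
begin

text \<open>Q = Z^I is represented as functions 'i => int; alpha_k is the indicator of k.\<close>

definition sroot :: "'i \<Rightarrow> 'i \<Rightarrow> int" where
  "sroot k = (\<lambda>l. if l = k then 1 else 0)"

definition bform :: "('i::finite \<Rightarrow> 'i \<Rightarrow> int) \<Rightarrow> ('i \<Rightarrow> nat) \<Rightarrow> ('i \<Rightarrow> int) \<Rightarrow> ('i \<Rightarrow> int) \<Rightarrow> int" where
  "bform a d mu nu = (\<Sum>k\<in>UNIV. \<Sum>l\<in>UNIV. mu k * nu l * int (d k) * a k l)"

text \<open>Weight (minus the degree) of a word F_{l1}...F_{ln}.\<close>
definition wt :: "'i list \<Rightarrow> 'i \<Rightarrow> int" where
  "wt w = (\<lambda>l. int (count_list w l))"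

definition is_GCM :: "('i::finite \<Rightarrow> 'i \<Rightarrow> int) \<Rightarrow> bool" where
  "is_GCM a \<longleftrightarrow> (\<forall>k. a k k = 2) \<and> (\<forall>k l. k \<noteq> l \<longrightarrow> a k l \<le> 0)
     \<and> (\<forall>k l. a k l = 0 \<longleftrightarrow> a l k = 0)"

text \<open>An element of T(V^-) is given by its coefficient function on words
  (the word [l1,...,ln] stands for F_{l1} ... F_{ln}).\<close>

definition Fmul :: "'i \<Rightarrow> ('i list \<Rightarrow> 'k::field) \<Rightarrow> 'i list \<Rightarrow> 'k" where
  "Fmul k g w = (case w of [] \<Rightarrow> 0 | l # w' \<Rightarrow> if l = k then g w' else 0)"

definition dL :: "('i::finite \<Rightarrow> 'i \<Rightarrow> int) \<Rightarrow> ('i \<Rightarrow> nat) \<Rightarrow> 'k::field \<Rightarrow> 'i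
    \<Rightarrow> ('i list \<Rightarrow> 'k) \<Rightarrow> 'i list \<Rightarrow> 'k" where
  "dL a d q k g w = (\<Sum>p\<le>length w. q powi (bform a d (sroot k) (wt (take p w)))
                        * g (take p w @ k # drop p w))"

text \<open>An element sum_mu K_mu g_mu of A is given by the function mu |-> g_mu
  (mu ranges over Q; only mu in G_theta occur for the elements considered).\<close>

definition basisA :: "('i \<Rightarrow> int) \<Rightarrow> 'i list \<Rightarrow> ('i \<Rightarrow> int) \<Rightarrow> 'i list \<Rightarrow> 'k::field" where
  "basisA mu w = (\<lambda>nu u. if nu = mu \<and> u = w then 1 else 0)"

definition oneA :: "('i \<Rightarrow> int) \<Rightarrow> 'i list \<Rightarrow> 'k::field" where
  "oneA = basisA (\<lambda>_. 0) []"

text \<open>Left circledast-multiplication by F_k: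
  F_k (*) (K_mu g) = q^{(mu,alpha_k)} K_mu (F_k g
      - c_k q^{(alpha_k,alpha_tau k)}/(q_k - q_k^{-1}) K_{alpha_{tau k}-alpha_k} partial^L_{tau k}(g)).\<close>
definition starF :: "('i::finite \<Rightarrow> 'i \<Rightarrow> int) \<Rightarrow> ('i \<Rightarrow> nat) \<Rightarrow> 'k::field \<Rightarrow> ('i \<Rightarrow> 'k)
    \<Rightarrow> ('i \<Rightarrow> 'i) \<Rightarrow> 'i \<Rightarrow> (('i \<Rightarrow> int) \<Rightarrow> 'i list \<Rightarrow> 'k) \<Rightarrow> ('i \<Rightarrow> int) \<Rightarrow> 'i list \<Rightarrow> 'k" where
  "starF a d q c \<tau> k X = (\<lambda>nu u.
      let qk = q ^ d k;
          C = c k * q powi (bform a d (sroot k) (sroot (\<tau> k))) / (qk - inverse qk);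
          mu' = nu - (sroot (\<tau> k) - sroot k)
      in q powi (bform a d nu (sroot k)) * Fmul k (X nu) u
         - C * q powi (bform a d mu' (sroot k)) * dL a d q (\<tau> k) (X mu') u)"

text \<open>F_i^{(*)r} (*) F_j (*) F_i^{(*)s}, computed by associativity as iterated left
  multiplication applied to 1.\<close>
definition starWord :: "('i::finite \<Rightarrow> 'i \<Rightarrow> int) \<Rightarrow> ('i \<Rightarrow> nat) \<Rightarrow> 'k::field \<Rightarrow> ('i \<Rightarrow> 'k)
    \<Rightarrow> ('i \<Rightarrow> 'i) \<Rightarrow> 'i \<Rightarrow> 'i \<Rightarrow> nat \<Rightarrow> nat \<Rightarrow> ('i \<Rightarrow> int) \<Rightarrow> 'i list \<Rightarrow> 'k" where
  "starWord a d q c \<tau> i j r s =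
     (starF a d q c \<tau> i ^^ r) (starF a d q c \<tau> j ((starF a d q c \<tau> i ^^ s) oneA))"

text \<open>For w = sum_{r,s} b_{rs} x^r y^s (outer variable x, inner variable y), the element
  sum_{r,s} b_{rs} F_i^{(*)r} (*) F_j (*) F_i^{(*)s} of A.\<close>
definition expandA :: "('i::finite \<Rightarrow> 'i \<Rightarrow> int) \<Rightarrow> ('i \<Rightarrow> nat) \<Rightarrow> 'k::field \<Rightarrow> ('i \<Rightarrow> 'k)
    \<Rightarrow> ('i \<Rightarrow> 'i) \<Rightarrow> 'i \<Rightarrow> 'i \<Rightarrow> 'k poly poly \<Rightarrow> ('i \<Rightarrow> int) \<Rightarrow> 'i list \<Rightarrow> 'k" where
  "expandA a d q c \<tau> i j w = (\<lambda>nu u.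
     \<Sum>r\<le>degree w. \<Sum>s\<le>degree (coeff w r).
        coeff (coeff w r) s * starWord a d q c \<tau> i j r s nu u)"

fun Hpoly :: "'a::comm_ring_1 \<Rightarrow> nat \<Rightarrow> 'a poly" where
  "Hpoly p 0 = 1"
| "Hpoly p (Suc 0) = [:0, 2:] * Hpoly p 0"
| "Hpoly p (Suc (Suc n)) = [:0, 2:] * Hpoly p (Suc n) - smult (1 - p ^ Suc n) (Hpoly p n)"

text \<open>Bivariate H_{m,n}(x,y;p,r) as a polynomial in x with coefficients in K[y].
  H_{-1,n} = H_{m,-1} = 0 is handled by the case distinctions.\<close>
fun Hbiv :: "'a::comm_ring_1 \<Rightarrow> 'a \<Rightarrow> nat \<Rightarrow> nat \<Rightarrow> 'a poly poly" where
  "Hbiv p r 0 n = [: Hpoly p n :]"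
| "Hbiv p r (Suc m) n =
     [:0, [:2:]:] * Hbiv p r m n
     - smult [: 1 - p ^ m :] (case m of 0 \<Rightarrow> 0 | Suc m' \<Rightarrow> Hbiv p r m' n)
     - smult [: p ^ m * (1 - p ^ n) * r :] (case n of 0 \<Rightarrow> 0 | Suc n' \<Rightarrow> Hbiv p r m n')"

end

theory Submission
  imports Defs
begin


lemma bform_sroot: "bform a d (sroot k) nu = (\<Sum>l\<in>UNIV. nu l * int (d k) * a k l)"
proof -
  have "bform a d (sroot k) nu = (\<Sum>k'\<in>UNIV. if k' = k then (\<Sum>l\<in>UNIV. nu l * int (d k) * a k l) else 0)"
    unfolding bform_def sroot_def by (rule sum.cong) auto
  then show ?thesis by simp
qed

lemma bform_zero[simp]: "bform a d (\<lambda>_. 0) nu = 0"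
  unfolding bform_def by simp


lemma bw_Nil: "bform a d (sroot k) (wt []) = 0"
  by (simp add: bform_sroot wt_def)

lemma bw_Cons: "bform a d (sroot k) (wt (x # w)) = int (d k) * a k x + bform a d (sroot k) (wt w)"
proof -
  have "bform a d (sroot k) (wt (x # w)) = (\<Sum>l\<in>UNIV. (if l = x then int (d k) * a k l else 0) + wt w l * int (d k) * a k l)"
    unfolding bform_sroot wt_def by (rule sum.cong) (auto simp: algebra_simps)
  also have "\<dots> = int (d k) * a k x + bform a d (sroot k) (wt w)"
    by (simp add: sum.distrib bform_sroot)
  finally show ?thesis .
qed

lemma bw_list: "bform a d (sroot k) (wt w) = (\<Sum>x\<leftarrow>w. int (d k) * a k x)"
  by (induction w) (simp_all add: bw_Nil bw_Cons)

lemma ins_set: "set (take p u @ x # drop p u) = insert x (set u)"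
  by (metis append_take_drop_id Un_insert_right list.set(2) set_append)

lemma ins_count: "count_list (take p u @ x # drop p u) y = count_list u y + (if x = y then 1 else 0)"
proof -
  have "count_list u y = count_list (take p u) y + count_list (drop p u) y"
    by (metis append_take_drop_id count_list_append)
  then show ?thesis by simp
qed

lemma dL_zero[simp]: "dL a d q k (\<lambda>_. 0) u = 0"
  by (simp add: dL_def)

lemma dL_notin: assumes "\<forall>u. k \<in> set u \<longrightarrow> g u = 0" shows "dL a d q k g u = 0"
  unfolding dL_def using assms by (intro sum.neutral) (simp add: ins_set)

definition form2 :: "'i \<Rightarrow> 'i \<Rightarrow> 'i list \<Rightarrow> bool" where
  "form2 i j u \<longleftrightarrow> set u \<subseteq> {i, j} \<and> count_list u j = 1"

lemma form2_cover: assumes "form2 i j u" "i \<noteq> j" shows "\<exists>x y. u = replicate x i @ j # replicate y i"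
  using assms
proof (induction u)
  case Nil
  then show ?case by (simp add: form2_def)
next
  case (Cons z u)
  show ?case
  proof (cases "z = j")
    case True
    then have "count_list u j = 0" "set u \<subseteq> {i, j}" using Cons.prems by (auto simp: form2_def)
    then have "set u \<subseteq> {i}" by (auto simp: count_list_0_iff)
    then have "u = replicate (length u) i"
      by (metis empty_iff insert_iff replicate_length_same subset_iff)
    then show ?thesis using True by (metis append_Nil replicate_0)
  next
    case False
    then have "z = i" "form2 i j u" using Cons.prems by (auto simp: form2_def)
    then obtain x y where "u = replicate x i @ j # replicate y i" using Cons by blast
    then show ?thesis using \<open>z = i\<close> by (metis append_Cons replicate_Suc)
  qed
qed

lemma form2_rep: "i \<noteq> j \<Longrightarrow> form2 i j (replicate x i @ j # replicate y i)"
  by (auto simp: form2_def)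

lemma rep2_inj: assumes "i \<noteq> j" "replicate x i @ j # replicate y i = replicate m i @ j # replicate n i"
  shows "x = m \<and> y = n"
proof -
  have tw: "takeWhile (\<lambda>z. z \<noteq> j) (replicate x' i @ j # replicate y' i) = replicate x' i" for x' y'
    using assms(1) by (subst takeWhile_append2) auto
  have "x = m" using tw[of x y] tw[of m n] assms(2) by (metis length_replicate)
  then show ?thesis using assms(2) by (metis append_eq_append_conv length_replicate list.inject)
qed

lemma rep_ins: "p \<le> b \<Longrightarrow> replicate p z @ z # replicate (b - p) z = replicate (Suc b) z"
proof -
  assume "p \<le> b"
  have "replicate p z @ z # replicate (b - p) z = replicate p z @ replicate (Suc (b - p)) z" by simp
  also have "\<dots> = replicate (p + Suc (b - p)) z" by (rule replicate_add[symmetric])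
  finally show ?thesis using \<open>p \<le> b\<close> by simp
qed

lemma sum_split_Suc: "(\<Sum>p\<le>x + Suc y. F p) = (\<Sum>p\<le>x. F p) + (\<Sum>t\<le>y. F (Suc x + t))"
  by (induction y) (simp_all add: algebra_simps)

locale hsetup =
  fixes a :: "'i::finite \<Rightarrow> 'i \<Rightarrow> int" and d :: "'i \<Rightarrow> nat" and q :: "'k::field"
    and c :: "'i \<Rightarrow> 'k" and \<tau> :: "'i \<Rightarrow> 'i" and i j :: 'i
  assumes a_ii: "a i i = 2" and tau_i: "\<tau> i = i" and ij: "i \<noteq> j" and tau_j: "\<tau> j \<noteq> i"
    and q_nz: "q \<noteq> 0"
begin

definition "Qv = q ^ (2 * d i)"
definition "Rv = q powi (int (d i) * a i j)"
definition "Cv = c i * q powi (bform a d (sroot i) (sroot i)) / (q ^ d i - inverse (q ^ d i))"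

lemma powi_bw1: "q powi bform a d (sroot i) (wt (replicate p i)) = Qv ^ p"
proof -
  have "bform a d (sroot i) (wt (replicate p i)) = int (2 * d i * p)"
    by (simp add: bw_list a_ii sum_list_replicate)
  then show ?thesis by (simp only: power_int_of_nat) (simp add: Qv_def power_mult)
qed

lemma powi_bw2: "q powi bform a d (sroot i) (wt (replicate x i @ j # replicate t i)) = Qv ^ x * Rv * Qv ^ t"
proof -
  have "bform a d (sroot i) (wt (replicate x i @ j # replicate t i)) = int (2 * d i * x) + int (d i) * a i j + int (2 * d i * t)"
    by (simp add: bw_list a_ii sum_list_replicate)
  then have "q powi bform a d (sroot i) (wt (replicate x i @ j # replicate t i)) = q powi (int (2 * d i * x)) * q powi (int (d i) * a i j) * q powi (int (2 * d i * t))"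
    using q_nz by (simp only: power_int_add[OF disjI1[OF q_nz]])
  then show ?thesis by (simp only: power_int_of_nat) (simp add: Qv_def Rv_def power_mult)
qed

lemma dL_rep1:
  assumes g0: "\<forall>u. \<not> set u \<subseteq> {i} \<longrightarrow> g u = 0"
  shows "dL a d q i g (replicate b i) = (\<Sum>p\<le>b. Qv^p) * g (replicate (Suc b) i)"
proof -
  have "dL a d q i g (replicate b i) = (\<Sum>p\<le>b. Qv^p * g (replicate (Suc b) i))"
    unfolding dL_def
  proof (rule sum.cong)
    fix p assume "p \<in> {..b}"
    then have "p \<le> b" by simp
    then have t: "take p (replicate b i) = replicate p i" and dr: "drop p (replicate b i) = replicate (b-p) i"
      by (simp_all add: min_def)
    show "q powi bform a d (sroot i) (wt (take p (replicate b i))) * g (take p (replicate b i) @ i # drop p (replicate b i))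
      = Qv ^ p * g (replicate (Suc b) i)"
      by (simp only: t dr powi_bw1 rep_ins[OF \<open>p \<le> b\<close>])
  qed simp
  then show ?thesis by (simp add: sum_distrib_right)
qed

lemma dL_rep1_zero:
  assumes g0: "\<forall>u. \<not> set u \<subseteq> {i} \<longrightarrow> g u = 0" and u: "\<not> set u \<subseteq> {i}"
  shows "dL a d q i g u = 0"
  unfolding dL_def
proof (intro sum.neutral ballI)
  fix p
  have "\<not> set (take p u @ i # drop p u) \<subseteq> {i}" using u by (simp only: ins_set) simp
  then show "q powi bform a d (sroot i) (wt (take p u)) * g (take p u @ i # drop p u) = 0"
    using g0 by simp
qed

lemma dL_rep2:
  assumes g0: "\<forall>u. \<not> form2 i j u \<longrightarrow> g u = 0"
  shows "dL a d q i g (replicate x i @ j # replicate y i) = (\<Sum>p\<le>x. Qv^p) * g (replicate (Suc x) i @ j # replicate y i)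
     + Qv^x * Rv * (\<Sum>t\<le>y. Qv^t) * g (replicate x i @ j # replicate (Suc y) i)"
proof -
  let ?u = "replicate x i @ j # replicate y i"
  let ?F = "\<lambda>p. q powi bform a d (sroot i) (wt (take p ?u)) * g (take p ?u @ i # drop p ?u)"
  have "dL a d q i g ?u = (\<Sum>p\<le>x + Suc y. ?F p)" unfolding dL_def by simp
  also have "\<dots> = (\<Sum>p\<le>x. ?F p) + (\<Sum>t\<le>y. ?F (Suc x + t))" by (rule sum_split_Suc)
  also have "(\<Sum>p\<le>x. ?F p) = (\<Sum>p\<le>x. Qv^p * g (replicate (Suc x) i @ j # replicate y i))"
  proof (rule sum.cong)
    fix p assume "p \<in> {..x}"
    then have "p \<le> x" by simp
    then have t: "take p ?u = replicate p i" and dr: "drop p ?u = replicate (x-p) i @ j # replicate y i"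
      by (simp_all add: min_def)
    have e: "replicate p i @ i # replicate (x - p) i @ j # replicate y i = replicate (Suc x) i @ j # replicate y i"
      using rep_ins[OF \<open>p \<le> x\<close>, of i] by (metis append.assoc append_Cons)
    show "?F p = Qv ^ p * g (replicate (Suc x) i @ j # replicate y i)"
      by (simp only: t dr powi_bw1 e)
  qed simp
  also have "(\<Sum>t\<le>y. ?F (Suc x + t)) = (\<Sum>t\<le>y. Qv^x * Rv * Qv^t * g (replicate x i @ j # replicate (Suc y) i))"
  proof (rule sum.cong)
    fix t assume "t \<in> {..y}"
    then have "t \<le> y" by simp
    then have t: "take (Suc x + t) ?u = replicate x i @ j # replicate t i" and dr: "drop (Suc x + t) ?u = replicate (y-t) i"
      by (simp_all add: min_def)
    have e: "(replicate x i @ j # replicate t i) @ i # replicate (y - t) i = replicate x i @ j # replicate (Suc y) i"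
      using rep_ins[OF \<open>t \<le> y\<close>, of i] by simp
    show "?F (Suc x + t) = Qv^x * Rv * Qv^t * g (replicate x i @ j # replicate (Suc y) i)"
      by (simp only: t dr powi_bw2 e)
  qed simp
  finally show ?thesis by (simp add: sum_distrib_right sum_distrib_left mult.assoc)
qed

lemma dL_rep2_zero:
  assumes g0: "\<forall>u. \<not> form2 i j u \<longrightarrow> g u = 0" and u: "\<not> form2 i j u"
  shows "dL a d q i g u = 0"
  unfolding dL_def
proof (intro sum.neutral ballI)
  fix p
  have "\<not> form2 i j (take p u @ i # drop p u)"
    using u ij unfolding form2_def by (simp only: ins_set ins_count) simp
  then show "q powi bform a d (sroot i) (wt (take p u)) * g (take p u @ i # drop p u) = 0"
    using g0 by simp
qed

lemma Fmul_Nil[simp]: "Fmul k g [] = 0" by (simp add: Fmul_def)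
lemma Fmul_Cons[simp]: "Fmul k g (l # w) = (if l = k then g w else 0)" by (simp add: Fmul_def)
definition rep1 :: "(('i \<Rightarrow> int) \<Rightarrow> 'i list \<Rightarrow> 'k) \<Rightarrow> (nat \<Rightarrow> 'k) \<Rightarrow> bool" where
  "rep1 X g \<longleftrightarrow> (\<forall>b. X (\<lambda>_. 0) (replicate b i) = g b) \<and>
     (\<forall>nu u. (nu \<noteq> (\<lambda>_. 0) \<or> \<not> set u \<subseteq> {i}) \<longrightarrow> X nu u = 0)"

definition rep2 :: "(('i \<Rightarrow> int) \<Rightarrow> 'i list \<Rightarrow> 'k) \<Rightarrow> (nat \<Rightarrow> nat \<Rightarrow> 'k) \<Rightarrow> bool" where
  "rep2 X f \<longleftrightarrow> (\<forall>x y. X (\<lambda>_. 0) (replicate x i @ j # replicate y i) = f x y) \<and>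
     (\<forall>nu u. (nu \<noteq> (\<lambda>_. 0) \<or> \<not> form2 i j u) \<longrightarrow> X nu u = 0)"

definition Yop :: "(nat \<Rightarrow> 'k) \<Rightarrow> nat \<Rightarrow> 'k" where
  "Yop g b = (case b of 0 \<Rightarrow> 0 | Suc b' \<Rightarrow> g b') - Cv * ((\<Sum>p\<le>b. Qv^p) * g (Suc b))"

definition Xop :: "(nat \<Rightarrow> nat \<Rightarrow> 'k) \<Rightarrow> nat \<Rightarrow> nat \<Rightarrow> 'k" where
  "Xop f x y = (case x of 0 \<Rightarrow> 0 | Suc x' \<Rightarrow> f x' y)
     - Cv * ((\<Sum>p\<le>x. Qv^p) * f (Suc x) y + Qv^x * Rv * (\<Sum>t\<le>y. Qv^t) * f x (Suc y))"

lemma Fmul_zero: "\<forall>w. h w = 0 \<Longrightarrow> Fmul k h u = 0" unfolding Fmul_def by (simp split: list.split)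

lemma starF_i_eq: "starF a d q c \<tau> i X = (\<lambda>nu u. q powi (bform a d nu (sroot i)) * (Fmul i (X nu) u - Cv * dL a d q i (X nu) u))"
proof -
  have e: "nu - (sroot i - sroot i) = nu" for nu :: "'i \<Rightarrow> int" by (simp add: fun_eq_iff)
  show ?thesis unfolding starF_def Let_def Cv_def tau_i e by (simp add: fun_eq_iff algebra_simps)
qed

lemma starF_i_rep1: assumes "rep1 X g" shows "rep1 (starF a d q c \<tau> i X) (Yop g)"
proof -
  have g0: "\<forall>u. \<not> set u \<subseteq> {i} \<longrightarrow> X (\<lambda>_. 0) u = 0" and v: "\<And>b. X (\<lambda>_. 0) (replicate b i) = g b"
    and z: "\<And>nu u. nu \<noteq> (\<lambda>_. 0) \<Longrightarrow> X nu u = 0"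
    using assms unfolding rep1_def by auto
  have A: "starF a d q c \<tau> i X (\<lambda>_. 0) (replicate b i) = Yop g b" for b
  proof -
    have "Fmul i (X (\<lambda>_. 0)) (replicate b i) = (case b of 0 \<Rightarrow> 0 | Suc b' \<Rightarrow> g b')"
      by (cases b) (simp_all add: v)
    then show ?thesis by (simp add: starF_i_eq dL_rep1[OF g0] v v[of "Suc b", simplified] Yop_def)
  qed
  have B: "starF a d q c \<tau> i X nu u = 0" if "nu \<noteq> (\<lambda>_. 0) \<or> \<not> set u \<subseteq> {i}" for nu u
  proof (cases "nu = (\<lambda>_. 0)")
    case False
    then have "X nu = (\<lambda>_. 0)" using z by auto
    then show ?thesis by (simp add: starF_i_eq Fmul_zero)
  next
    case True
    then have u: "\<not> set u \<subseteq> {i}" using that by simp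
    have "Fmul i (X (\<lambda>_. 0)) u = 0"
    proof (cases u)
      case (Cons l w)
      then show ?thesis using u g0 by auto
    qed simp
    then show ?thesis using True by (simp add: starF_i_eq dL_rep1_zero[OF g0 u])
  qed
  show ?thesis unfolding rep1_def using A B by blast
qed

lemma starF_j_rep1: assumes "rep1 X g" shows "rep2 (starF a d q c \<tau> j X) (\<lambda>x y. if x = 0 then g y else 0)"
proof -
  have g0: "\<forall>u. \<not> set u \<subseteq> {i} \<longrightarrow> X (\<lambda>_. 0) u = 0" and v: "\<And>b. X (\<lambda>_. 0) (replicate b i) = g b"
    and z: "\<And>nu u. nu \<noteq> (\<lambda>_. 0) \<or> \<not> set u \<subseteq> {i} \<Longrightarrow> X nu u = 0"
    using assms unfolding rep1_def by auto
  have dz: "dL a d q (\<tau> j) (X mu) u = 0" for mu u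
    by (rule dL_notin) (use z tau_j in blast)
  have E: "starF a d q c \<tau> j X nu u = q powi (bform a d nu (sroot j)) * Fmul j (X nu) u" for nu u
    unfolding starF_def Let_def by (simp add: dz)
  have A: "starF a d q c \<tau> j X (\<lambda>_. 0) (replicate x i @ j # replicate y i) = (if x = 0 then g y else 0)" for x y
    using ij by (cases x) (simp_all add: E v)
  have B: "starF a d q c \<tau> j X nu u = 0" if "nu \<noteq> (\<lambda>_. 0) \<or> \<not> form2 i j u" for nu u
  proof (cases "nu = (\<lambda>_. 0)")
    case False
    then show ?thesis using z by (simp add: E Fmul_zero)
  next
    case True
    then have u: "\<not> form2 i j u" using that by simp
    have "Fmul j (X (\<lambda>_. 0)) u = 0"
    proof (cases u)
      case (Cons l w)
      show ?thesis
      proof (cases "l = j")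
        case True
        have "\<not> set w \<subseteq> {i}"
        proof
          assume "set w \<subseteq> {i}"
          then have "j \<notin> set w" using ij by auto
          then have "form2 i j u" using \<open>set w \<subseteq> {i}\<close> Cons True unfolding form2_def by auto
          then show False using u by simp
        qed
        then show ?thesis using Cons True g0 by simp
      qed (simp add: Cons)
    qed simp
    then show ?thesis using True by (simp add: E)
  qed
  show ?thesis unfolding rep2_def using A B by blast
qed

lemma starF_i_rep2: assumes "rep2 X f" shows "rep2 (starF a d q c \<tau> i X) (Xop f)"
proof -
  have g0: "\<forall>u. \<not> form2 i j u \<longrightarrow> X (\<lambda>_. 0) u = 0" and v: "\<And>x y. X (\<lambda>_. 0) (replicate x i @ j # replicate y i) = f x y"
    and z: "\<And>nu u. nu \<noteq> (\<lambda>_. 0) \<Longrightarrow> X nu u = 0"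
    using assms unfolding rep2_def by auto
  have A: "starF a d q c \<tau> i X (\<lambda>_. 0) (replicate x i @ j # replicate y i) = Xop f x y" for x y
  proof -
    have "Fmul i (X (\<lambda>_. 0)) (replicate x i @ j # replicate y i) = (case x of 0 \<Rightarrow> 0 | Suc x' \<Rightarrow> f x' y)"
      using ij by (cases x) (simp_all add: v)
    then show ?thesis by (simp add: starF_i_eq dL_rep2[OF g0] v v[of "Suc x" y, simplified] v[of x "Suc y", simplified] Xop_def)
  qed
  have B: "starF a d q c \<tau> i X nu u = 0" if "nu \<noteq> (\<lambda>_. 0) \<or> \<not> form2 i j u" for nu u
  proof (cases "nu = (\<lambda>_. 0)")
    case False
    then have "X nu = (\<lambda>_. 0)" using z by auto
    then show ?thesis by (simp add: starF_i_eq Fmul_zero)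
  next
    case True
    then have u: "\<not> form2 i j u" using that by simp
    have "Fmul i (X (\<lambda>_. 0)) u = 0"
    proof (cases u)
      case (Cons l w)
      show ?thesis
      proof (cases "l = i")
        case True
        have "\<not> form2 i j w" using u Cons True ij unfolding form2_def by auto
        then show ?thesis using Cons True g0 by simp
      qed (simp add: Cons)
    qed simp
    then show ?thesis using True by (simp add: starF_i_eq dL_rep2_zero[OF g0 u])
  qed
  show ?thesis unfolding rep2_def using A B by blast
qed

lemma oneA_rep1: "rep1 oneA (\<lambda>b. if b = 0 then 1 else 0)"
proof -
  have A: "oneA (\<lambda>_. 0) (replicate b i) = (if b = 0 then 1 else 0)" for b
    unfolding oneA_def basisA_def by simp
  have B: "oneA nu u = 0" if "nu \<noteq> (\<lambda>_. 0) \<or> \<not> set u \<subseteq> {i}" for nu u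
    using that unfolding oneA_def basisA_def by (cases "nu = (\<lambda>_. 0)") auto
  show ?thesis unfolding rep1_def using A B by blast
qed

lemma basis_rep2: "rep2 (basisA (\<lambda>_. 0) (replicate m i @ [j] @ replicate n i)) (\<lambda>x y. if x = m \<and> y = n then 1 else 0)"
proof -
  have A: "basisA (\<lambda>_. 0) (replicate m i @ [j] @ replicate n i) (\<lambda>_. 0) (replicate x i @ j # replicate y i) = (if x = m \<and> y = n then 1 else 0)" for x y
  proof (cases "x = m \<and> y = n")
    case False
    then have "replicate x i @ j # replicate y i \<noteq> replicate m i @ j # replicate n i" using rep2_inj[OF ij] by blast
    then show ?thesis using False unfolding basisA_def by simp
  qed (simp add: basisA_def)
  have B: "basisA (\<lambda>_. 0) (replicate m i @ [j] @ replicate n i) nu u = 0" if "nu \<noteq> (\<lambda>_. 0) \<or> \<not> form2 i j u" for nu u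
  proof (cases "nu = (\<lambda>_. 0) \<and> u = replicate m i @ [j] @ replicate n i")
    case True
    then show ?thesis using that form2_rep[OF ij, of m n] by simp
  qed (auto simp: basisA_def)
  show ?thesis unfolding rep2_def using A B by blast
qed

lemma rep2_ext: assumes "rep2 X f" "rep2 Y f" shows "X = Y"
proof (intro ext)
  fix nu u
  show "X nu u = Y nu u"
  proof (cases "nu = (\<lambda>_. 0) \<and> form2 i j u")
    case True
    then have "form2 i j u" by simp
    from form2_cover[OF this ij] obtain x y where u: "u = replicate x i @ j # replicate y i" by blast
    have "X (\<lambda>_. 0) u = f x y" "Y (\<lambda>_. 0) u = f x y" using assms unfolding rep2_def u by blast+
    then show ?thesis using True by simp
  next
    case False
    then have c: "nu \<noteq> (\<lambda>_. 0) \<or> \<not> form2 i j u" by blast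
    have "X nu u = 0" using assms(1) c unfolding rep2_def by blast
    moreover have "Y nu u = 0" using assms(2) c unfolding rep2_def by blast
    ultimately show ?thesis by simp
  qed
qed

lemma rep2_lin:
  assumes "\<And>r s. rep2 (Z r s) (F r s)"
  shows "rep2 (\<lambda>nu u. \<Sum>r\<in>A. \<Sum>s\<in>B r. k r s * Z r s nu u) (\<lambda>x y. \<Sum>r\<in>A. \<Sum>s\<in>B r. k r s * F r s x y)"
proof -
  have A: "\<And>x y. Z r s (\<lambda>_. 0) (replicate x i @ j # replicate y i) = F r s x y" for r s
    using assms unfolding rep2_def by blast
  have B: "\<And>nu u. nu \<noteq> (\<lambda>_. 0) \<or> \<not> form2 i j u \<Longrightarrow> Z r s nu u = 0" for r s
    using assms unfolding rep2_def by blast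
  show ?thesis unfolding rep2_def by (simp add: A B)
qed

definition garr :: "nat \<Rightarrow> nat \<Rightarrow> 'k" where
  "garr s = (Yop ^^ s) (\<lambda>b. if b = 0 then 1 else 0)"

definition farr :: "nat \<Rightarrow> nat \<Rightarrow> nat \<Rightarrow> nat \<Rightarrow> 'k" where
  "farr r s = (Xop ^^ r) (\<lambda>x y. if x = 0 then garr s y else 0)"

lemma starWord_rep2: "rep2 (starWord a d q c \<tau> i j r s) (farr r s)"
proof -
  have 1: "rep1 ((starF a d q c \<tau> i ^^ s') oneA) (garr s')" for s'
    by (induction s') (simp_all add: garr_def oneA_rep1 starF_i_rep1)
  have 2: "rep2 ((starF a d q c \<tau> i ^^ r') (starF a d q c \<tau> j ((starF a d q c \<tau> i ^^ s) oneA))) (farr r' s)" for r'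
    by (induction r') (simp_all add: farr_def starF_j_rep1[OF 1] starF_i_rep2)
  show ?thesis unfolding starWord_def by (rule 2)
qed

end



context hsetup begin

lemma garr_Suc: "garr (Suc s) = Yop (garr s)" by (simp add: garr_def)
lemma farr_Suc: "farr (Suc r) s = Xop (farr r s)" by (simp add: farr_def)
lemma farr_0: "farr 0 s x y = (if x = 0 then garr s y else 0)" by (simp add: farr_def)

lemma garr_supp: "s \<le> b \<Longrightarrow> garr s b = (if b = s then 1 else 0)"
proof (induction s arbitrary: b)
  case 0
  then show ?case by (simp add: garr_def)
next
  case (Suc s)
  then obtain b' where b: "b = Suc b'" "s \<le> b'" by (cases b) auto
  have "garr s (Suc (Suc b')) = 0" using Suc.IH[of "Suc (Suc b')"] b by simp
  then show ?case using Suc.IH[of b'] b by (simp add: garr_Suc Yop_def)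
qed

lemma farr_supp: "r + s \<le> x + y \<Longrightarrow> farr r s x y = (if x = r \<and> y = s then 1 else 0)"
proof (induction r arbitrary: x y)
  case 0
  then show ?case by (simp add: farr_0 garr_supp)
next
  case (Suc r)
  have z1: "farr r s (Suc x) y = 0" using Suc.IH[of "Suc x" y] Suc.prems by simp
  have z2: "farr r s x (Suc y) = 0" using Suc.IH[of x "Suc y"] Suc.prems by simp
  show ?case
  proof (cases x)
    case 0
    then show ?thesis using z1 z2 by (simp add: farr_Suc Xop_def)
  next
    case (Suc x')
    then show ?thesis using Suc.IH[of x' y] \<open>Suc r + s \<le> x + y\<close> z1 z2 by (simp add: farr_Suc Xop_def)
  qed
qed

definition Exb :: "nat \<Rightarrow> (nat \<Rightarrow> nat \<Rightarrow> 'k) \<Rightarrow> nat \<Rightarrow> nat \<Rightarrow> 'k" where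
  "Exb N cc x y = (\<Sum>r\<le>N. \<Sum>s\<le>N. cc r s * farr r s x y)"

lemma Ex_inj:
  assumes z: "\<forall>x y. Exb N cc x y = 0" and "r \<le> N" "s \<le> N"
  shows "cc r s = 0"
proof (rule ccontr)
  assume "cc r s \<noteq> 0"
  let ?S = "{p \<in> {..N} \<times> {..N}. cc (fst p) (snd p) \<noteq> 0}"
  have fin: "finite ?S" by simp
  have ne: "(r, s) \<in> ?S" using \<open>cc r s \<noteq> 0\<close> assms by simp
  let ?M = "Max ((\<lambda>p. fst p + snd p) ` ?S)"
  have "?M \<in> (\<lambda>p. fst p + snd p) ` ?S" using fin ne by (intro Max_in) auto
  then obtain r0 s0 where p0: "(r0, s0) \<in> ?S" "r0 + s0 = ?M" by auto
  have le: "r' + s' \<le> r0 + s0" if "(r', s') \<in> ?S" for r' s'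
    using p0(2) fin that by (metis (no_types, lifting) Max_ge finite_imageI fst_conv image_eqI snd_conv)
  have "Exb N cc r0 s0 = (\<Sum>r'\<le>N. \<Sum>s'\<le>N. if r' = r0 \<and> s' = s0 then cc r0 s0 else 0)"
    unfolding Exb_def
  proof (intro sum.cong refl)
    fix r' s' assume "r' \<in> {..N}" "s' \<in> {..N}"
    show "cc r' s' * farr r' s' r0 s0 = (if r' = r0 \<and> s' = s0 then cc r0 s0 else 0)"
    proof (cases "cc r' s' = 0")
      case True
      then show ?thesis using p0 by auto
    next
      case False
      then have "r' + s' \<le> r0 + s0" using le \<open>r' \<in> {..N}\<close> \<open>s' \<in> {..N}\<close> by simp
      then show ?thesis using farr_supp[of r' s' r0 s0] by auto
    qed
  qed
  also have "\<dots> = (\<Sum>r'\<le>N. if r' = r0 then cc r0 s0 else 0)"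
  proof (rule sum.cong)
    fix r' show "(\<Sum>s'\<le>N. if r' = r0 \<and> s' = s0 then cc r0 s0 else 0) = (if r' = r0 then cc r0 s0 else 0)"
      using p0 by (cases "r' = r0") (simp_all add: sum.delta)
  qed simp
  also have "\<dots> = cc r0 s0" using p0 by (simp add: sum.delta)
  finally show False using z p0 by simp
qed

definition "alph x = Cv * (\<Sum>p\<le>x. Qv^p)"
definition "bet x y = Cv * Qv^x * Rv * (\<Sum>t\<le>y. Qv^t)"

lemma Xop_alt: "Xop F x y = (case x of 0 \<Rightarrow> 0 | Suc x' \<Rightarrow> F x' y) - alph x * F (Suc x) y - bet x y * F x (Suc y)"
  by (simp add: Xop_def alph_def bet_def algebra_simps)

lemma Yop_alt: "Yop G y = (case y of 0 \<Rightarrow> 0 | Suc y' \<Rightarrow> G y') - alph y * G (Suc y)"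
  by (simp add: Yop_def alph_def algebra_simps)

lemma Xop_sum: "Xop (\<lambda>x y. \<Sum>r\<in>A. \<Sum>s\<in>B. k r s * G r s x y) x y = (\<Sum>r\<in>A. \<Sum>s\<in>B. k r s * Xop (G r s) x y)"
  by (cases x) (simp_all add: Xop_alt right_diff_distrib sum_subtractf sum_negf sum_distrib_left mult.left_commute)

lemma Yop_sum: "Yop (\<lambda>y. \<Sum>s\<in>B. k s * G s y) y = (\<Sum>s\<in>B. k s * Yop (G s) y)"
  by (cases y) (simp_all add: Yop_alt right_diff_distrib sum_subtractf sum_negf sum_distrib_left mult.left_commute)

end



context hsetup begin

definition "qn n = (\<Sum>p<n. Qv^p)"

fun Vp :: "nat \<Rightarrow> 'k poly" where
  "Vp 0 = 1"
| "Vp (Suc n) = pCons 0 (Vp n) + smult (Cv * qn n) (case n of 0 \<Rightarrow> 0 | Suc n' \<Rightarrow> Vp n')"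

fun Wp :: "nat \<Rightarrow> nat \<Rightarrow> 'k poly poly" where
  "Wp 0 n = [: Vp n :]"
| "Wp (Suc m) n = pCons 0 (Wp m n) + smult [: Cv * qn m :] (case m of 0 \<Rightarrow> 0 | Suc m' \<Rightarrow> Wp m' n)
     + smult [: Cv * Qv^m * Rv * qn n :] (case n of 0 \<Rightarrow> 0 | Suc n' \<Rightarrow> Wp m n')"

definition "cV n s = coeff (Vp n) s"
definition "cW m n r s = coeff (coeff (Wp m n) r) s"

lemma cV_0: "cV 0 s = (if s = 0 then 1 else 0)"
  by (simp add: cV_def)

lemma cV_Suc: "cV (Suc n) s = (case s of 0 \<Rightarrow> 0 | Suc s' \<Rightarrow> cV n s') + Cv * qn n * (case n of 0 \<Rightarrow> 0 | Suc n' \<Rightarrow> cV n' s)"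
  by (cases n; cases s) (simp_all add: cV_def coeff_pCons)

lemma cW_0: "cW 0 n r s = (if r = 0 then cV n s else 0)"
  by (cases r) (simp_all add: cW_def cV_def)

lemma cW_Suc: "cW (Suc m) n r s = (case r of 0 \<Rightarrow> 0 | Suc r' \<Rightarrow> cW m n r' s)
   + Cv * qn m * (case m of 0 \<Rightarrow> 0 | Suc m' \<Rightarrow> cW m' n r s)
   + Cv * Qv^m * Rv * qn n * (case n of 0 \<Rightarrow> 0 | Suc n' \<Rightarrow> cW m n' r s)"
  by (cases m; cases n; cases r) (simp_all add: cW_def coeff_pCons)

lemma cV_supp: "n < s \<Longrightarrow> cV n s = 0"
proof (induction n arbitrary: s rule: less_induct)
  case (less n)
  show ?case
  proof (cases n)
    case 0
    then show ?thesis using less.prems by (simp add: cV_0)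
  next
    case (Suc k)
    then obtain s' where s': "s = Suc s'" "k < s'" using less.prems by (cases s) auto
    have a: "cV k s' = 0" using less.IH Suc s' by simp
    have b: "(case k of 0 \<Rightarrow> 0 | Suc k' \<Rightarrow> cV k' (Suc s')) = 0"
      using less.IH Suc s' by (cases k) auto
    show ?thesis unfolding Suc s'(1) cV_Suc b by (simp add: a)
  qed
qed

lemma cW_supp: "m < r \<or> n < s \<Longrightarrow> cW m n r s = 0"
proof (induction m n arbitrary: r s rule: Wp.induct)
  case (1 n)
  then show ?case by (auto simp: cW_0 intro: cV_supp)
next
  case (2 m n)
  have a: "(case r of 0 \<Rightarrow> 0 | Suc r' \<Rightarrow> cW m n r' s) = 0"
    using 2 by (cases r) auto
  have b: "(case m of 0 \<Rightarrow> 0 | Suc m' \<Rightarrow> cW m' n r s) = 0"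
    using 2 by (cases m) auto
  have c: "(case n of 0 \<Rightarrow> 0 | Suc n' \<Rightarrow> cW m n' r s) = 0"
    using 2 by (cases n) auto
  show ?case by (simp only: cW_Suc a b c) simp
qed

definition "dl m n x y = (if x = m \<and> y = n then (1::'k) else 0)"

lemma Exb_lin: "Exb N (\<lambda>r s. A r s + k1 * B r s + k2 * C r s) x y = Exb N A x y + k1 * Exb N B x y + k2 * Exb N C x y"
  by (simp add: Exb_def algebra_simps sum.distrib sum_distrib_left)

lemma Exb_shift:
  assumes "\<forall>s. cc N s = 0"
  shows "Exb N (\<lambda>r s. case r of 0 \<Rightarrow> 0 | Suc r' \<Rightarrow> cc r' s) x y = Xop (Exb N cc) x y"
proof (cases N)
  case 0
  then show ?thesis using assms by (cases x) (simp_all add: Exb_def Xop_def)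
next
  case (Suc N')
  have "Exb N (\<lambda>r s. case r of 0 \<Rightarrow> 0 | Suc r' \<Rightarrow> cc r' s) x y = (\<Sum>r\<le>N'. \<Sum>s\<le>N. cc r s * farr (Suc r) s x y)"
    unfolding Exb_def Suc by (subst sum.atMost_Suc_shift) simp
  also have "\<dots> = (\<Sum>r\<le>N'. \<Sum>s\<le>N. cc r s * Xop (farr r s) x y)" by (simp add: farr_Suc)
  also have "\<dots> = Xop (\<lambda>x y. \<Sum>r\<le>N'. \<Sum>s\<le>N. cc r s * farr r s x y) x y" by (rule Xop_sum[symmetric])
  also have "(\<lambda>x y. \<Sum>r\<le>N'. \<Sum>s\<le>N. cc r s * farr r s x y) = Exb N cc"
    unfolding Exb_def Suc using assms Suc by (simp add: fun_eq_iff)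
  finally show ?thesis .
qed

definition "Ey N g y = (\<Sum>s\<le>N. g s * garr s y)"

lemma Ey_shift:
  assumes "g N = 0"
  shows "Ey N (\<lambda>s. case s of 0 \<Rightarrow> 0 | Suc s' \<Rightarrow> g s') y = Yop (Ey N g) y"
proof (cases N)
  case 0
  then show ?thesis using assms by (cases y) (simp_all add: Ey_def Yop_def)
next
  case (Suc N')
  have "Ey N (\<lambda>s. case s of 0 \<Rightarrow> 0 | Suc s' \<Rightarrow> g s') y = (\<Sum>s\<le>N'. g s * garr (Suc s) y)"
    unfolding Ey_def Suc by (subst sum.atMost_Suc_shift) simp
  also have "\<dots> = (\<Sum>s\<le>N'. g s * Yop (garr s) y)" by (simp add: garr_Suc)
  also have "\<dots> = Yop (\<lambda>y. \<Sum>s\<le>N'. g s * garr s y) y" by (rule Yop_sum[symmetric])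
  also have "(\<lambda>y. \<Sum>s\<le>N'. g s * garr s y) = Ey N g"
    unfolding Ey_def Suc using assms Suc by (simp add: fun_eq_iff)
  finally show ?thesis .
qed

lemma Ey_V: "n < N \<Longrightarrow> Ey N (cV n) y = (if y = n then 1 else 0)"
proof (induction n arbitrary: y rule: less_induct)
  case (less n)
  show ?case
  proof (cases n)
    case 0
    have "Ey N (cV 0) y = (\<Sum>s\<le>N. if s = 0 then garr s y else 0)"
      unfolding Ey_def by (intro sum.cong) (auto simp: cV_0)
    then show ?thesis using 0 by (simp add: sum.delta garr_def)
  next
    case (Suc k)
    have e: "cV n = (\<lambda>s. (case s of 0 \<Rightarrow> 0 | Suc s' \<Rightarrow> cV k s') + Cv * qn k * (case k of 0 \<Rightarrow> 0 | Suc k' \<Rightarrow> cV k' s))"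
      using Suc by (simp add: fun_eq_iff cV_Suc)
    have "Ey N (cV n) y = Ey N (\<lambda>s. case s of 0 \<Rightarrow> 0 | Suc s' \<Rightarrow> cV k s') y
        + Cv * qn k * (case k of 0 \<Rightarrow> 0 | Suc k' \<Rightarrow> Ey N (cV k') y)"
      unfolding e Ey_def by (cases k) (simp_all add: algebra_simps sum.distrib sum_distrib_left)
    also have "Ey N (\<lambda>s. case s of 0 \<Rightarrow> 0 | Suc s' \<Rightarrow> cV k s') y = Yop (Ey N (cV k)) y"
      using cV_supp[of k N] less.prems Suc by (intro Ey_shift) simp
    also have "Ey N (cV k) = (\<lambda>y. if y = k then 1 else 0)"
      using less.IH[of k] less.prems Suc by (simp add: fun_eq_iff)
    finally show ?thesis using less.IH less.prems Suc
      by (cases k; cases y) (auto simp: Yop_def qn_def lessThan_Suc_atMost[symmetric])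
  qed
qed

lemma Xop_dl: "Xop (dl m n) x y = dl (Suc m) n x y - Cv * qn m * (case m of 0 \<Rightarrow> 0 | Suc m' \<Rightarrow> dl m' n x y)
   - Cv * Qv^m * Rv * qn n * (case n of 0 \<Rightarrow> 0 | Suc n' \<Rightarrow> dl m n' x y)"
  by (cases x; cases m; cases n) (auto simp: Xop_def dl_def qn_def lessThan_Suc_atMost[symmetric])

lemma Exb_W: "m + n < N \<Longrightarrow> Exb N (cW m n) x y = dl m n x y"
proof (induction m n arbitrary: x y rule: Wp.induct)
  case (1 n)
  have "Exb N (cW 0 n) x y = (\<Sum>r\<le>N. if r = 0 then (\<Sum>s\<le>N. cV n s * farr 0 s x y) else 0)"
    unfolding Exb_def by (intro sum.cong) (auto simp: cW_0)
  also have "\<dots> = (\<Sum>s\<le>N. cV n s * farr 0 s x y)" by (simp add: sum.delta)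
  also have "\<dots> = (if x = 0 then Ey N (cV n) y else 0)" by (simp add: farr_0 Ey_def)
  finally show ?case using Ey_V[of n N y] 1 by (auto simp: dl_def)
next
  case (2 m n)
  have e: "cW (Suc m) n = (\<lambda>r s. (case r of 0 \<Rightarrow> 0 | Suc r' \<Rightarrow> cW m n r' s)
   + (Cv * qn m) * (case m of 0 \<Rightarrow> 0 | Suc m' \<Rightarrow> cW m' n r s)
   + (Cv * Qv^m * Rv * qn n) * (case n of 0 \<Rightarrow> 0 | Suc n' \<Rightarrow> cW m n' r s))"
    by (simp add: fun_eq_iff cW_Suc)
  have A: "Exb N (\<lambda>r s. case r of 0 \<Rightarrow> 0 | Suc r' \<Rightarrow> cW m n r' s) x y = Xop (dl m n) x y"
  proof -
    have "Exb N (\<lambda>r s. case r of 0 \<Rightarrow> 0 | Suc r' \<Rightarrow> cW m n r' s) x y = Xop (Exb N (cW m n)) x y"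
      using cW_supp[of m N n] 2 by (intro Exb_shift) auto
    also have "Exb N (cW m n) = dl m n" using 2 by (simp add: fun_eq_iff)
    finally show ?thesis .
  qed
  have B: "Exb N (\<lambda>r s. case m of 0 \<Rightarrow> 0 | Suc m' \<Rightarrow> cW m' n r s) x y = (case m of 0 \<Rightarrow> 0 | Suc m' \<Rightarrow> dl m' n x y)"
    using 2 by (cases m) (simp_all add: Exb_def)
  have C: "Exb N (\<lambda>r s. case n of 0 \<Rightarrow> 0 | Suc n' \<Rightarrow> cW m n' r s) x y = (case n of 0 \<Rightarrow> 0 | Suc n' \<Rightarrow> dl m n' x y)"
    using 2 by (cases n) (simp_all add: Exb_def)
  show ?case unfolding e Exb_lin A B C Xop_dl by simp
qed

lemma expand_rep2: "rep2 (expandA a d q c \<tau> i j w)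
   (\<lambda>x y. \<Sum>r\<le>degree w. \<Sum>s\<le>degree (coeff w r). coeff (coeff w r) s * farr r s x y)"
  unfolding expandA_def by (rule rep2_lin[OF starWord_rep2])

lemma box_ext:
  fixes w :: "'k poly poly" and F :: "nat \<Rightarrow> nat \<Rightarrow> 'k"
  assumes "degree w \<le> N" "\<forall>r. degree (coeff w r) \<le> N"
  shows "(\<Sum>r\<le>degree w. \<Sum>s\<le>degree (coeff w r). coeff (coeff w r) s * F r s) = (\<Sum>r\<le>N. \<Sum>s\<le>N. coeff (coeff w r) s * F r s)"
proof -
  have "(\<Sum>r\<le>degree w. \<Sum>s\<le>degree (coeff w r). coeff (coeff w r) s * F r s) = (\<Sum>r\<le>degree w. \<Sum>s\<le>N. coeff (coeff w r) s * F r s)"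
  proof (rule sum.cong[OF refl])
    fix r
    show "(\<Sum>s\<le>degree (coeff w r). coeff (coeff w r) s * F r s) = (\<Sum>s\<le>N. coeff (coeff w r) s * F r s)"
      using assms(2) by (intro sum.mono_neutral_left) (auto simp: coeff_eq_0)
  qed
  also have "\<dots> = (\<Sum>r\<le>N. \<Sum>s\<le>N. coeff (coeff w r) s * F r s)"
    using assms(1) by (intro sum.mono_neutral_left) (auto simp: coeff_eq_0)
  finally show ?thesis .
qed

lemma bnd_ex: "\<exists>N0. \<forall>N\<ge>N0. degree w \<le> N \<and> (\<forall>r. degree (coeff w r) \<le> N)"
proof -
  let ?N0 = "degree w + (\<Sum>r\<le>degree w. degree (coeff w r))"
  have "degree (coeff w r) \<le> ?N0" for r
  proof (cases "r \<le> degree w")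
    case True
    then have "degree (coeff w r) \<le> (\<Sum>r\<le>degree w. degree (coeff w r))"
      by (intro member_le_sum) auto
    then show ?thesis by simp
  next
    case False
    then show ?thesis by (simp add: coeff_eq_0)
  qed
  then show ?thesis by (intro exI[of _ ?N0]) (auto intro: le_trans)
qed

lemma expand_Exb:
  assumes "degree w \<le> N" "\<forall>r. degree (coeff w r) \<le> N"
  shows "rep2 (expandA a d q c \<tau> i j w) (Exb N (\<lambda>r s. coeff (coeff w r) s))"
  using expand_rep2[of w] box_ext[OF assms] unfolding Exb_def by simp

lemma rep2_val: "rep2 X f \<Longrightarrow> rep2 X g \<Longrightarrow> f x y = g x y"
  unfolding rep2_def by metis

lemma Exb_diff: "Exb N (\<lambda>r s. A r s - B r s) x y = Exb N A x y - Exb N B x y"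
  by (simp add: Exb_def algebra_simps sum_subtractf)

lemma main_char:
  "(\<exists>!w. expandA a d q c \<tau> i j w = basisA (\<lambda>_. 0) (replicate m i @ [j] @ replicate n i))
   \<and> (\<forall>w. expandA a d q c \<tau> i j w = basisA (\<lambda>_. 0) (replicate m i @ [j] @ replicate n i)
        \<longrightarrow> (\<forall>r s. coeff (coeff w r) s = cW m n r s))"
proof -
  let ?T = "basisA (\<lambda>_. 0) (replicate m i @ [j] @ replicate n i) :: ('i \<Rightarrow> int) \<Rightarrow> 'i list \<Rightarrow> 'k"
  have T: "rep2 ?T (dl m n)" using basis_rep2[of m n] unfolding dl_def[abs_def] by simp
  obtain N1 where N1: "\<forall>N\<ge>N1. degree (Wp m n) \<le> N \<and> (\<forall>r. degree (coeff (Wp m n) r) \<le> N)"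
    using bnd_ex by blast
  have cWe: "(\<lambda>r s. coeff (coeff (Wp m n) r) s) = cW m n" by (simp add: cW_def[abs_def])
  have ex: "expandA a d q c \<tau> i j (Wp m n) = ?T"
  proof -
    let ?N = "max N1 (Suc (m + n))"
    have "rep2 (expandA a d q c \<tau> i j (Wp m n)) (Exb ?N (cW m n))"
      using expand_Exb[of "Wp m n" ?N] N1 cWe by simp
    moreover have "Exb ?N (cW m n) = dl m n" using Exb_W[of m n ?N] by (simp add: fun_eq_iff)
    ultimately show ?thesis using rep2_ext T by simp
  qed
  have ch: "\<forall>r s. coeff (coeff w r) s = cW m n r s" if w: "expandA a d q c \<tau> i j w = ?T" for w
  proof (intro allI)
    fix r s
    obtain N2 where N2: "\<forall>N\<ge>N2. degree w \<le> N \<and> (\<forall>r. degree (coeff w r) \<le> N)"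
      using bnd_ex by blast
    define N where "N = max (max N1 N2) (max (Suc (m + n)) (max r s))"
    have dw: "degree w \<le> N" "\<forall>r. degree (coeff w r) \<le> N" using N2 N_def by auto
    have "rep2 ?T (Exb N (\<lambda>r s. coeff (coeff w r) s))" using expand_Exb[OF dw] w by simp
    then have e1: "Exb N (\<lambda>r s. coeff (coeff w r) s) x y = dl m n x y" for x y using T rep2_val by blast
    have e2: "Exb N (cW m n) x y = dl m n x y" for x y using Exb_W[of m n N] N_def by simp
    have "\<forall>x y. Exb N (\<lambda>r s. coeff (coeff w r) s - cW m n r s) x y = 0"
      by (simp add: Exb_diff e1 e2)
    then have "coeff (coeff w r) s - cW m n r s = 0"
      using Ex_inj[of N "\<lambda>r s. coeff (coeff w r) s - cW m n r s" r s] N_def by simp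
    then show "coeff (coeff w r) s = cW m n r s" by simp
  qed
  have "w = Wp m n" if "expandA a d q c \<tau> i j w = ?T" for w
    using ch[OF that] by (simp add: poly_eq_iff cW_def)
  then show ?thesis using ex ch by blast
qed

end



lemma Hpoly_coeff_Suc: "coeff (Hpoly p (Suc n)) s = 2 * (case s of 0 \<Rightarrow> 0 | Suc s' \<Rightarrow> coeff (Hpoly p n) s')
   - (1 - p ^ n) * (case n of 0 \<Rightarrow> 0 | Suc n' \<Rightarrow> coeff (Hpoly p n') s)"
  by (cases n; cases s) (auto simp: coeff_pCons split: nat.split)

lemma Hbiv_coeff_0: "coeff (coeff (Hbiv p rr 0 n) r) s = (if r = 0 then coeff (Hpoly p n) s else 0)"
  by (cases r) simp_all

lemma Hbiv_coeff_Suc: "coeff (coeff (Hbiv p rr (Suc m) n) r) s =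
   2 * (case r of 0 \<Rightarrow> 0 | Suc r' \<Rightarrow> coeff (coeff (Hbiv p rr m n) r') s)
   - (1 - p ^ m) * (case m of 0 \<Rightarrow> 0 | Suc m' \<Rightarrow> coeff (coeff (Hbiv p rr m' n) r) s)
   - p ^ m * (1 - p ^ n) * rr * (case n of 0 \<Rightarrow> 0 | Suc n' \<Rightarrow> coeff (coeff (Hbiv p rr m n') r) s)"
  by (cases m; cases n; cases r) (auto simp: coeff_pCons split: nat.split)

lemma alg_shift:
  fixes B h :: "'l::field"
  assumes "B \<noteq> 0" "(2::'l) \<noteq> 0"
  shows "2 * h * B ^ Suc s / (2 * B) ^ Suc n = h * B ^ s / (2 * B) ^ n"
  using assms by (simp add: field_simps)

lemma alg_down:
  fixes B K E X :: "'l::field"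
  assumes "B \<noteq> 0" "(2::'l) \<noteq> 0" "K * (4 * B ^ 2) = E"
  shows "E * X / (2 * B) ^ Suc (Suc k) = K * (X / (2 * B) ^ k)"
proof -
  let ?Y = "4 * B ^ 2"
  have d: "(2 * B) ^ Suc (Suc k) = (2 * B) ^ k * ?Y" by (simp add: power2_eq_square algebra_simps)
  have y: "?Y \<noteq> 0" using assms(1,2)
    by (metis mult_eq_0_iff numeral_Bit0 power_not_zero one_add_one mult_2)
  have "E * X / (2 * B) ^ Suc (Suc k) = ((K * X) * ?Y) / ((2 * B) ^ k * ?Y)"
    unfolding d assms(3)[symmetric] by (simp only: mult_ac)
  also have "\<dots> = (K * X) / (2 * B) ^ k" by (rule nonzero_mult_divide_mult_cancel_right[OF y])
  finally show ?thesis by simp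
qed

lemma neg_lem1:
  fixes x y z w :: "'l::field"
  shows "(1 - x) * y * z / w = - ((x - 1) * (y * z) / w)"
proof -
  have e: "1 - x = - (x - 1)" by simp
  show ?thesis by (simp only: e minus_divide_left mult_minus_left mult.assoc)
qed

lemma neg_lem2:
  fixes x y z w p rr :: "'l::field"
  shows "p * (1 - x) * rr * y * z / w = - ((p * rr * (x - 1)) * (y * z) / w)"
proof -
  have e: "1 - x = - (x - 1)" by simp
  have "p * (1 - x) * rr * y * z = - ((p * rr * (x - 1)) * (y * z))"
    by (simp only: e mult_minus_left mult_minus_right mult.assoc mult.left_commute[of rr])
  then show ?thesis by (simp only: minus_divide_left)
qed

locale phis = hsetup a d q c \<tau> i j
  for a :: "'i::finite \<Rightarrow> 'i \<Rightarrow> int" and d :: "'i \<Rightarrow> nat" and q :: "'k::field"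
    and c :: "'i \<Rightarrow> 'k" and \<tau> :: "'i \<Rightarrow> 'i" and i j :: 'i +
  fixes \<phi> :: "'k \<Rightarrow> 'l::field" and \<beta> :: 'l
  assumes hom_add: "\<forall>x y. \<phi> (x + y) = \<phi> x + \<phi> y" and hom_mult: "\<forall>x y. \<phi> (x * y) = \<phi> x * \<phi> y"
    and hom_one: "\<phi> 1 = 1"
    and c_nz: "c i \<noteq> 0" and qroot: "q ^ (2 * d i) \<noteq> 1" and two_nz: "(2::'k) \<noteq> 0"
    and beta: "\<beta> ^ 2 = \<phi> ((q ^ d i - inverse (q ^ d i)) ^ 2 / (4 * c i * q ^ d i))"
begin

lemma phi_add: "\<phi> (x + y) = \<phi> x + \<phi> y" using hom_add by blast
lemma phi_mult: "\<phi> (x * y) = \<phi> x * \<phi> y" using hom_mult by blast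
lemma phi_0: "\<phi> 0 = 0" using phi_add[of 0 0] by (metis add_0 add_cancel_right_right)
lemma phi_neg: "\<phi> (- x) = - \<phi> x"
proof -
  have "\<phi> x + \<phi> (- x) = 0" using phi_add[of x "- x"] phi_0 by simp
  then show ?thesis by (metis neg_eq_iff_add_eq_0)
qed
lemma phi_diff: "\<phi> (x - y) = \<phi> x - \<phi> y" using phi_add[of x "- y"] phi_neg by simp
lemma phi_pow: "\<phi> (x ^ n) = \<phi> x ^ n" by (induction n) (simp_all add: hom_one phi_mult)
lemma phi_sum: "\<phi> (\<Sum>x\<in>A. f x) = (\<Sum>x\<in>A. \<phi> (f x))"
  by (induction A rule: infinite_finite_induct) (simp_all add: phi_0 phi_add)
lemma phi_nz: "x \<noteq> 0 \<Longrightarrow> \<phi> x \<noteq> 0"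
proof -
  assume "x \<noteq> 0"
  then have "\<phi> x * \<phi> (inverse x) = 1" using phi_mult[of x "inverse x"] hom_one by simp
  then show ?thesis by auto
qed
lemma phi_two: "\<phi> 2 = 2" using phi_add[of 1 1] hom_one by (simp add: one_add_one)
lemma two_nz': "(2::'l) \<noteq> 0" using phi_nz[OF two_nz] phi_two by simp
lemma phi_four: "\<phi> 4 = 4"
proof -
  have "(4::'k) = 2 + 2" by simp
  then have "\<phi> 4 = \<phi> 2 + \<phi> 2" using phi_add by metis
  then show ?thesis using phi_two by simp
qed

definition "kap = (q ^ d i - inverse (q ^ d i)) ^ 2 / (4 * c i * q ^ d i)"

lemma Qv_eq: "Qv = (q ^ d i) ^ 2" by (simp only: Qv_def mult.commute[of 2] power_mult)

lemma Cv_eq: "Cv = c i * Qv / (q ^ d i - inverse (q ^ d i))"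
proof -
  have "bform a d (sroot i) (sroot i) = int (2 * d i)"
  proof -
    have "bform a d (sroot i) (sroot i) = (\<Sum>l\<in>UNIV. if l = i then int (d i) * a i l else 0)"
      unfolding bform_sroot by (rule sum.cong) (auto simp: sroot_def)
    then show ?thesis by (simp add: a_ii)
  qed
  then show ?thesis unfolding Cv_def Qv_def by (simp only: power_int_of_nat)
qed

lemma key_k: "Cv * (4 * kap) = Qv - 1"
proof -
  let ?x = "q ^ d i"
  have x0: "?x \<noteq> 0" using q_nz by simp
  have x1: "?x - inverse ?x \<noteq> 0"
  proof
    assume "?x - inverse ?x = 0"
    then have "?x * ?x = 1" using x0 by (simp add: field_simps)
    then show False using qroot Qv_eq Qv_def by (simp add: power2_eq_square)
  qed
  have "(4::'k) = 2 * 2" by simp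
  then have four: "(4::'k) \<noteq> 0" using two_nz by (metis mult_eq_0_iff)
  show ?thesis unfolding Cv_eq kap_def Qv_eq using x0 x1 c_nz four
    by (simp add: field_simps power2_eq_square)
qed

lemma kap_nz: "kap \<noteq> 0"
proof -
  have "Cv * (4 * kap) \<noteq> 0" using key_k qroot Qv_def by simp
  then show ?thesis by auto
qed

lemma beta_nz: "\<beta> \<noteq> 0"
  using beta phi_nz[OF kap_nz] unfolding kap_def by auto

lemma beta_kap: "\<beta> ^ 2 = \<phi> kap" using beta unfolding kap_def .

lemma key: "\<phi> Cv * (4 * \<beta> ^ 2) = \<phi> Qv - 1"
proof -
  have "\<phi> Cv * (4 * \<beta> ^ 2) = \<phi> (Cv * (4 * kap))" by (simp only: beta_kap phi_mult phi_four)
  also have "\<dots> = \<phi> Qv - 1" using key_k phi_diff hom_one by simp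
  finally show ?thesis .
qed

lemma key_qn: "\<phi> (Cv * qn n) * (4 * \<beta> ^ 2) = \<phi> Qv ^ n - 1"
proof -
  have q: "\<phi> (qn n) = (\<Sum>p<n. \<phi> Qv ^ p)" by (simp add: qn_def phi_sum phi_pow)
  have "\<phi> (Cv * qn n) * (4 * \<beta> ^ 2) = (\<phi> Cv * (4 * \<beta> ^ 2)) * \<phi> (qn n)" by (simp add: phi_mult mult_ac)
  also have "\<dots> = (\<phi> Qv - 1) * (\<Sum>p<n. \<phi> Qv ^ p)" by (simp only: key q)
  finally show ?thesis by (simp add: power_diff_1_eq)
qed

definition "Hs n s = coeff (Hpoly (\<phi> Qv) n) s * \<beta> ^ s / (2 * \<beta>) ^ n"
definition "Hb m n r s = coeff (coeff (Hbiv (\<phi> Qv) (\<phi> Rv) m n) r) s * \<beta> ^ (r + s) / (2 * \<beta>) ^ (m + n)"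

lemma alg_shift': "N = Suc N' \<Longrightarrow> S = Suc S' \<Longrightarrow> 2 * h * \<beta> ^ S / (2 * \<beta>) ^ N = h * \<beta> ^ S' / (2 * \<beta>) ^ N'"
  using alg_shift[OF beta_nz two_nz'] by simp

lemma alg_down': "N = Suc (Suc N') \<Longrightarrow> K * (4 * \<beta> ^ 2) = E \<Longrightarrow> E * X / (2 * \<beta>) ^ N = K * (X / (2 * \<beta>) ^ N')"
  using alg_down[OF beta_nz two_nz'] by simp

lemma Hs_Suc: "Hs (Suc n) s = (case s of 0 \<Rightarrow> 0 | Suc s' \<Rightarrow> Hs n s') + \<phi> (Cv * qn n) * (case n of 0 \<Rightarrow> 0 | Suc n' \<Rightarrow> Hs n' s)"
proof -
  let ?P = "\<phi> Qv"
  let ?A = "case s of 0 \<Rightarrow> 0 | Suc s' \<Rightarrow> coeff (Hpoly ?P n) s'"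
  let ?B = "case n of 0 \<Rightarrow> 0 | Suc n' \<Rightarrow> coeff (Hpoly ?P n') s"
  have "Hs (Suc n) s = 2 * ?A * \<beta> ^ s / (2 * \<beta>) ^ Suc n - (1 - ?P ^ n) * ?B * \<beta> ^ s / (2 * \<beta>) ^ Suc n"
    unfolding Hs_def Hpoly_coeff_Suc by (simp add: diff_divide_distrib left_diff_distrib mult.assoc)
  also have "2 * ?A * \<beta> ^ s / (2 * \<beta>) ^ Suc n = (case s of 0 \<Rightarrow> 0 | Suc s' \<Rightarrow> Hs n s')"
  proof (cases s)
    case (Suc s')
    show ?thesis unfolding Suc nat.case Hs_def by (rule alg_shift[OF beta_nz two_nz'])
  qed simp
  also have "(1 - ?P ^ n) * ?B * \<beta> ^ s / (2 * \<beta>) ^ Suc n = - (\<phi> (Cv * qn n) * (case n of 0 \<Rightarrow> 0 | Suc n' \<Rightarrow> Hs n' s))"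
  proof (cases n)
    case 0
    then show ?thesis by simp
  next
    case (Suc n')
    have "(?P ^ n - 1) * (coeff (Hpoly ?P n') s * \<beta> ^ s) / (2 * \<beta>) ^ Suc n = \<phi> (Cv * qn n) * Hs n' s"
      unfolding Hs_def by (rule alg_down'[OF _ key_qn]) (simp add: Suc)
    then show ?thesis unfolding neg_lem1 using Suc by simp
  qed
  finally show ?thesis by simp
qed

lemma key3: "\<phi> (Cv * Qv ^ m * Rv * qn n) * (4 * \<beta> ^ 2) = \<phi> Qv ^ m * \<phi> Rv * (\<phi> Qv ^ n - 1)"
proof -
  have "\<phi> (Cv * Qv ^ m * Rv * qn n) = \<phi> (Qv ^ m * Rv) * \<phi> (Cv * qn n)" by (simp only: phi_mult[symmetric] mult_ac)
  then have "\<phi> (Cv * Qv ^ m * Rv * qn n) * (4 * \<beta> ^ 2) = \<phi> (Qv ^ m * Rv) * (\<phi> (Cv * qn n) * (4 * \<beta> ^ 2))" by simp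
  moreover have "\<phi> (Cv * qn n) * (4 * \<beta> ^ 2) = \<phi> Qv ^ n - 1" by (rule key_qn)
  ultimately show ?thesis by (simp only: phi_mult phi_pow)
qed

lemma Hb_0: "Hb 0 n r s = (if r = 0 then Hs n s else 0)"
  unfolding Hb_def Hbiv_coeff_0 by (simp add: Hs_def)

lemma Hb_Suc: "Hb (Suc m) n r s = (case r of 0 \<Rightarrow> 0 | Suc r' \<Rightarrow> Hb m n r' s)
   + \<phi> (Cv * qn m) * (case m of 0 \<Rightarrow> 0 | Suc m' \<Rightarrow> Hb m' n r s)
   + \<phi> (Cv * Qv ^ m * Rv * qn n) * (case n of 0 \<Rightarrow> 0 | Suc n' \<Rightarrow> Hb m n' r s)"
proof -
  let ?P = "\<phi> Qv" and ?R = "\<phi> Rv"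
  let ?h = "\<lambda>m n r s. coeff (coeff (Hbiv ?P ?R m n) r) s"
  let ?A = "case r of 0 \<Rightarrow> 0 | Suc r' \<Rightarrow> ?h m n r' s"
  let ?B = "case m of 0 \<Rightarrow> 0 | Suc m' \<Rightarrow> ?h m' n r s"
  let ?C = "case n of 0 \<Rightarrow> 0 | Suc n' \<Rightarrow> ?h m n' r s"
  let ?D = "(2 * \<beta>) ^ (Suc m + n)"
  have "Hb (Suc m) n r s = 2 * ?A * \<beta> ^ (r + s) / ?D - (1 - ?P ^ m) * ?B * \<beta> ^ (r + s) / ?D
      - ?P ^ m * (1 - ?P ^ n) * ?R * ?C * \<beta> ^ (r + s) / ?D"
    unfolding Hb_def Hbiv_coeff_Suc by (simp add: diff_divide_distrib left_diff_distrib mult.assoc)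
  also have "2 * ?A * \<beta> ^ (r + s) / ?D = (case r of 0 \<Rightarrow> 0 | Suc r' \<Rightarrow> Hb m n r' s)"
  proof (cases r)
    case (Suc r')
    have e: "Suc r' + s = Suc (r' + s)" "Suc m + n = Suc (m + n)" by simp_all
    show ?thesis unfolding Suc nat.case Hb_def e by (rule alg_shift[OF beta_nz two_nz'])
  qed simp
  also have "(1 - ?P ^ m) * ?B * \<beta> ^ (r + s) / ?D = - (\<phi> (Cv * qn m) * (case m of 0 \<Rightarrow> 0 | Suc m' \<Rightarrow> Hb m' n r s))"
  proof (cases m)
    case 0
    then show ?thesis by simp
  next
    case (Suc m')
    have "(?P ^ m - 1) * (?h m' n r s * \<beta> ^ (r + s)) / ?D = \<phi> (Cv * qn m) * Hb m' n r s"
      unfolding Hb_def by (rule alg_down'[OF _ key_qn]) (simp add: Suc)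
    then show ?thesis unfolding neg_lem1 using Suc by simp
  qed
  also have "?P ^ m * (1 - ?P ^ n) * ?R * ?C * \<beta> ^ (r + s) / ?D = - (\<phi> (Cv * Qv ^ m * Rv * qn n) * (case n of 0 \<Rightarrow> 0 | Suc n' \<Rightarrow> Hb m n' r s))"
  proof (cases n)
    case 0
    then show ?thesis by simp
  next
    case (Suc n')
    have "(?P ^ m * ?R * (?P ^ n - 1)) * (?h m n' r s * \<beta> ^ (r + s)) / ?D = \<phi> (Cv * Qv ^ m * Rv * qn n) * Hb m n' r s"
      unfolding Hb_def by (rule alg_down'[OF _ key3]) (simp add: Suc)
    then show ?thesis unfolding neg_lem2 using Suc by simp
  qed
  finally show ?thesis by simp
qed

lemma phi_case: "\<phi> (case n of 0 \<Rightarrow> 0 | Suc n' \<Rightarrow> f n') = (case n of 0 \<Rightarrow> 0 | Suc n' \<Rightarrow> \<phi> (f n'))"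
  by (cases n) (simp_all add: phi_0)

lemma phi_cV: "\<phi> (cV n s) = Hs n s"
proof (induction n arbitrary: s rule: less_induct)
  case (less n)
  show ?case
  proof (cases n)
    case 0
    then show ?thesis by (simp add: cV_0 Hs_def phi_0 hom_one)
  next
    case (Suc k)
    have a: "(case s of 0 \<Rightarrow> 0 | Suc s' \<Rightarrow> \<phi> (cV k s')) = (case s of 0 \<Rightarrow> 0 | Suc s' \<Rightarrow> Hs k s')"
      using less.IH Suc by (cases s) auto
    have b: "(case k of 0 \<Rightarrow> 0 | Suc k' \<Rightarrow> \<phi> (cV k' s)) = (case k of 0 \<Rightarrow> 0 | Suc k' \<Rightarrow> Hs k' s)"
      using less.IH Suc by (cases k) auto
    show ?thesis unfolding Suc cV_Suc Hs_Suc by (simp only: phi_add phi_mult phi_case a b)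
  qed
qed

lemma phi_cW: "\<phi> (cW m n r s) = Hb m n r s"
proof (induction m n arbitrary: r s rule: Wp.induct)
  case (1 n)
  then show ?case by (simp add: cW_0 Hb_0 phi_cV phi_0)
next
  case (2 m n)
  have a: "(case r of 0 \<Rightarrow> 0 | Suc r' \<Rightarrow> \<phi> (cW m n r' s)) = (case r of 0 \<Rightarrow> 0 | Suc r' \<Rightarrow> Hb m n r' s)"
    using 2 by (cases r) auto
  have b: "(case m of 0 \<Rightarrow> 0 | Suc m' \<Rightarrow> \<phi> (cW m' n r s)) = (case m of 0 \<Rightarrow> 0 | Suc m' \<Rightarrow> Hb m' n r s)"
    using 2 by (cases m) auto
  have c: "(case n of 0 \<Rightarrow> 0 | Suc n' \<Rightarrow> \<phi> (cW m n' r s)) = (case n of 0 \<Rightarrow> 0 | Suc n' \<Rightarrow> Hb m n' r s)"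
    using 2 by (cases n) auto
  show ?case unfolding cW_Suc Hb_Suc by (simp only: phi_add phi_mult phi_case a b c)
qed

end


theorem proposition4p8:
  fixes a :: "'i::finite \<Rightarrow> 'i \<Rightarrow> int" and d :: "'i \<Rightarrow> nat"
    and q :: "'k::field_char_0" and \<tau> :: "'i \<Rightarrow> 'i" and c :: "'i \<Rightarrow> 'k"
    and i j :: 'i and m n :: nat
    and \<phi> :: "'k \<Rightarrow> 'l::field" and \<beta> :: 'l
  assumes GCM: "is_GCM a"
    and d_pos: "\<forall>k. d k > 0"
    and d_coprime: "Gcd (range d) = 1"
    and d_sym: "\<forall>k l. int (d k) * a k l = int (d l) * a l k"
    and q_nz: "q \<noteq> 0"
    and q_root: "\<forall>k. q ^ (2 * d k) \<noteq> 1"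
    and tau_inv: "\<forall>k. \<tau> (\<tau> k) = k"
    and tau_a: "\<forall>k l. a (\<tau> k) (\<tau> l) = a k l"
    and c_nz: "\<forall>k. c k \<noteq> 0"
    and c_tau: "\<forall>k. a k (\<tau> k) = 0 \<longrightarrow> c k = c (\<tau> k)"
    and tau_i: "\<tau> i = i" and ij: "i \<noteq> j"
    and hom_add: "\<forall>x y. \<phi> (x + y) = \<phi> x + \<phi> y"
    and hom_mult: "\<forall>x y. \<phi> (x * y) = \<phi> x * \<phi> y"
    and hom_one: "\<phi> 1 = 1"
    and beta: "\<beta> ^ 2 = \<phi> ((q ^ d i - inverse (q ^ d i)) ^ 2 / (4 * c i * q ^ d i))"
  shows "(\<exists>!w::'k poly poly. expandA a d q c \<tau> i j w = basisA (\<lambda>_. 0) (replicate m i @ [j] @ replicate n i))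
    \<and> (\<forall>w::'k poly poly. expandA a d q c \<tau> i j w = basisA (\<lambda>_. 0) (replicate m i @ [j] @ replicate n i)
         \<longrightarrow> (\<forall>r s. \<phi> (coeff (coeff w r) s)
               = coeff (coeff (Hbiv (\<phi> (q ^ d i) ^ 2) (\<phi> ((q ^ d i) powi (a i j))) m n) r) s
                 * \<beta> ^ (r + s) / (2 * \<beta>) ^ (m + n)))"
  proof -
  have tau_j: "\<tau> j \<noteq> i" using tau_inv tau_i ij by metis
  have a_ii: "a i i = 2" using GCM unfolding is_GCM_def by blast
  have two: "(2::'k) \<noteq> 0" by simp
  interpret P: phis a d q c \<tau> i j \<phi> \<beta>
    by unfold_locales (use a_ii tau_i ij tau_j q_nz c_nz q_root two hom_add hom_mult hom_one beta in auto)
  have Qe: "\<phi> P.Qv = \<phi> (q ^ d i) ^ 2" by (simp only: P.Qv_eq P.phi_pow)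
  have Re: "P.Rv = (q ^ d i) powi (a i j)" unfolding P.Rv_def
    by (simp only: power_int_mult power_int_of_nat)
  note mc = P.main_char[of m n]
  show ?thesis
  proof (rule conjI)
    show "\<exists>!w. expandA a d q c \<tau> i j w = basisA (\<lambda>_. 0) (replicate m i @ [j] @ replicate n i)"
      using mc by blast
    show "\<forall>w. expandA a d q c \<tau> i j w = basisA (\<lambda>_. 0) (replicate m i @ [j] @ replicate n i) \<longrightarrow>
      (\<forall>r s. \<phi> (coeff (coeff w r) s) = coeff (coeff (Hbiv (\<phi> (q ^ d i) ^ 2) (\<phi> ((q ^ d i) powi (a i j))) m n) r) s *
               \<beta> ^ (r + s) / (2 * \<beta>) ^ (m + n))"
    proof (intro allI impI)
      fix w r s
      assume "expandA a d q c \<tau> i j w = basisA (\<lambda>_. 0) (replicate m i @ [j] @ replicate n i)"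
      then have "coeff (coeff w r) s = P.cW m n r s" using mc by blast
      then show "\<phi> (coeff (coeff w r) s) = coeff (coeff (Hbiv (\<phi> (q ^ d i) ^ 2) (\<phi> ((q ^ d i) powi (a i j))) m n) r) s *
               \<beta> ^ (r + s) / (2 * \<beta>) ^ (m + n)"
        using P.phi_cW[of m n r s] unfolding P.Hb_def Qe Re by simp
    qed
  qed
qed

end
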